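(* For any $(m,n)$-Dyck path $\Pi$, $\operatorname{maxtdinv}(\Pi) = \operatorname{tdinv}(PF)$ where $PF$ is the parking function supported by $\Pi$ with $\sigma(PF) = n \, \dots \, 2 \, \, 1$. In particular, \[ \operatorname{maxtdinv}(\Pi) = \sum_{c,c'} \chi(\rank(c) < \rank(c') < \rank(c)+m) \] where the sum is over parking spaces $c,c'$ in $\Pi$.
   Context: Let $m,n$ be positive integers. An $(m,n)$-Dyck path $\Pi$ is a lattice path of north and east steps from $(0,0)$ to $(m,n)$ staying weakly above the line $y=\frac{n}{m}x$. The cells directly east of (and adjacent to) north steps of $\Pi$ are called parking spaces. An $(m,n)$-parking function $PF$ supported by $\Pi$ (written $\Pi(PF)=\Pi$) is obtained by filling the parking spaces with the labels ("cars") $1,\dots,n$, each used once, so that labels increase up each column. For a lattice point, $\rank(x,y)=my-nx+\lfloor \frac{x\gcd(m,n)}{m}\rfloor$; the rank of a cell (or of the car in it) is the rank of its southwest corner. The word $\sigma(PF)$ lists the cars in order from highest to lowest rank. Define $\operatorname{tdinv}(PF)=\sum_{\text{cars } i<j}\chi(\rank(i)<\rank(j)<\rank(i)+m)$ and $\operatorname{maxtdinv}(\Pi)=\max\{\operatorname{tdinv}(PF):\Pi(PF)=\Pi\}$. Here $\chi$ is the indicator function. *)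

theory Defs
  imports Complex_Main
begin

text \<open>An (m,n)-Dyck path is encoded by the function a, where a y is the x-coordinate
of the north step of the path in row y (from (a y, y) to (a y, y+1)), for y < n.
The path is then the unique N/E lattice path from (0,0) to (m,n) with these north
steps; it stays weakly above y = (n/m) x iff n * a y \<le> m * y for all rows y
(the lowest points of the path relative to the line are the points (a y, y)).
Values of a at y \<ge> n are irrelevant.\<close>

definition dyck_path :: "nat \<Rightarrow> nat \<Rightarrow> (nat \<Rightarrow> nat) \<Rightarrow> bool" where
  "dyck_path m n a \<longleftrightarrow>
     (\<forall>y z. y \<le> z \<and> z < n \<longrightarrow> a y \<le> a z) \<and>
     (\<forall>y<n. a y \<le> m \<and> n * a y \<le> m * y)"

definition rank :: "nat \<Rightarrow> nat \<Rightarrow> nat \<Rightarrow> nat \<Rightarrow> int" where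
  "rank m n x y = int m * int y - int n * int x + \<lfloor>real (x * gcd m n) / real m\<rfloor>"

text \<open>The parking space in row y is the cell with south-west corner (a y, y).\<close>
definition space_rank :: "nat \<Rightarrow> nat \<Rightarrow> (nat \<Rightarrow> nat) \<Rightarrow> nat \<Rightarrow> int" where
  "space_rank m n a y = rank m n (a y) y"

text \<open>A parking function supported by the path a: f y is the car placed in the
parking space of row y; cars 1..n each used once; increasing up each column.\<close>
definition parking_function :: "nat \<Rightarrow> nat \<Rightarrow> (nat \<Rightarrow> nat) \<Rightarrow> (nat \<Rightarrow> nat) \<Rightarrow> bool" where
  "parking_function m n a f \<longleftrightarrow>
     bij_betw f {0..<n} {1..n} \<and>
     (\<forall>y z. y < z \<and> z < n \<and> a y = a z \<longrightarrow> f y < f z)"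

definition car_row :: "nat \<Rightarrow> (nat \<Rightarrow> nat) \<Rightarrow> nat \<Rightarrow> nat" where
  "car_row n f i = (THE y. y < n \<and> f y = i)"

definition car_rank :: "nat \<Rightarrow> nat \<Rightarrow> (nat \<Rightarrow> nat) \<Rightarrow> (nat \<Rightarrow> nat) \<Rightarrow> nat \<Rightarrow> int" where
  "car_rank m n a f i = space_rank m n a (car_row n f i)"

definition tdinv :: "nat \<Rightarrow> nat \<Rightarrow> (nat \<Rightarrow> nat) \<Rightarrow> (nat \<Rightarrow> nat) \<Rightarrow> nat" where
  "tdinv m n a f = card {(i, j). i \<in> {1..n} \<and> j \<in> {1..n} \<and> i < j \<and>
      car_rank m n a f i < car_rank m n a f j \<and>
      car_rank m n a f j < car_rank m n a f i + int m}"

definition maxtdinv :: "nat \<Rightarrow> nat \<Rightarrow> (nat \<Rightarrow> nat) \<Rightarrow> nat" where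
  "maxtdinv m n a = Max {tdinv m n a f | f. parking_function m n a f}"

text \<open>sigma(PF) = n ... 2 1 : listing cars from highest to lowest rank gives n,...,1,
i.e. car i has strictly smaller rank than car j whenever i < j.\<close>
definition sigma_is_reverse :: "nat \<Rightarrow> nat \<Rightarrow> (nat \<Rightarrow> nat) \<Rightarrow> (nat \<Rightarrow> nat) \<Rightarrow> bool" where
  "sigma_is_reverse m n a f \<longleftrightarrow>
     (\<forall>i\<in>{1..n}. \<forall>j\<in>{1..n}. i < j \<longrightarrow> car_rank m n a f i < car_rank m n a f j)"

end

theory Submission
  imports Defs
begin

lemma div_helper: "(g::nat) > 0 \<Longrightarrow> m = g*q \<Longrightarrow> m div g = q"
  by simp

lemma div_helper2: "(g::nat) > 0 \<Longrightarrow> (x*g) div (g*q) = x div q"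
  by (simp add: mult.commute[of x g])

lemma div_helper3: "(m::nat) = g*q \<Longrightarrow> g > 0 \<Longrightarrow> (x * g) div m = x div (m div g)"
  by (simp add: div_helper2)

lemma rank_alt:
  assumes "0 < m"
  shows "rank m n x y = int m * int y - int n * int x + int (x div (m div gcd m n))"
proof -
  have d: "gcd m n dvd m" by simp
  have dpos: "gcd m n > 0" using assms by simp
  have "\<lfloor>real (x * gcd m n) / real m\<rfloor> = int ((x * gcd m n) div m)"
    by (metis floor_divide_of_nat_eq of_nat_id)
  also have "(x * gcd m n) div m = x div (m div gcd m n)"
  proof -
    obtain q where q: "m = gcd m n * q" using d by (metis dvd_def)
    show ?thesis using div_helper3[OF q dpos] .
  qed
  finally show ?thesis unfolding rank_def by simp
qed

lemma int_key:
  fixes d q p k k' r r' y y' :: int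
  assumes "d > 0" "q > 0" "coprime p q"
    "0 \<le> k" "k < d" "0 \<le> k'" "k' < d" "0 \<le> r" "r < q" "0 \<le> r'" "r' < q"
    "d*q*y - d*p*(q*k+r) + k = d*q*y' - d*p*(q*k'+r') + k'"
  shows "y = y'"
proof -
  have "(d*q*y - d*p*(q*k+r) + k) mod d = (d*(q*y - p*(q*k+r)) + k) mod d" by (simp add: algebra_simps)
  also have "\<dots> = k mod d" by (metis mod_mult_self3 mult.commute)
  also have "\<dots> = k" using assms by simp
  finally have "(d*q*y - d*p*(q*k+r) + k) mod d = k" .
  moreover have "(d*q*y' - d*p*(q*k'+r') + k') mod d = (d*(q*y' - p*(q*k'+r')) + k') mod d" by (simp add: algebra_simps)
  moreover have "(d*(q*y' - p*(q*k'+r')) + k') mod d = k' mod d" by (metis mod_mult_self3 mult.commute)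
  moreover have "k' mod d = k'" using assms by simp
  ultimately have kk: "k = k'" using assms(12) by simp
  with assms(12) have e: "d*(q*(y-y')) = d*(p*(r-r'))" by (simp add: algebra_simps)
  hence e2: "q*(y-y') = p*(r-r')" using assms(1) by simp
  hence "q dvd p*(r-r')" by (metis dvd_triv_left)
  hence "q dvd (r-r')" using assms(3) by (metis coprime_commute coprime_dvd_mult_right_iff)
  then obtain t where t: "r - r' = q*t" by (auto simp: dvd_def)
  have "t = 0"
  proof (rule ccontr)
    assume "t \<noteq> 0"
    hence "\<bar>q*t\<bar> \<ge> q" using assms(2) by (simp add: abs_mult)
    thus False using t assms by linarith
  qed
  hence "r = r'" using t by simp
  with e2 show ?thesis using assms(2) by simp
qed

lemma rank_inj:
  assumes "0 < m" "x < m" "x' < m" "rank m n x y = rank m n x' y'"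
  shows "y = y'"
proof -
  define g where "g = gcd m n"
  define q where "q = m div g"
  define p where "p = n div g"
  have gpos: "g > 0" using assms g_def by simp
  have mq: "m = g*q" unfolding q_def g_def by simp
  have np: "n = g*p" unfolding p_def g_def by simp
  have qpos: "q > 0" using mq assms by (metis gr0I mult_is_0 not_less0)
  have cop: "coprime p q" unfolding p_def q_def g_def
    using assms(1) by (metis coprime_commute div_gcd_coprime gcd_eq_0_iff not_gr0)
  have xk: "x div q < g" using assms(2) mq qpos
    by (metis div_less_iff_less_mult mult.commute)
  have xk': "x' div q < g" using assms(3) mq qpos
    by (metis div_less_iff_less_mult mult.commute)
  have ex: "int x = int q * int (x div q) + int (x mod q)" by (metis of_nat_add of_nat_mult div_mult_mod_eq mult.commute)
  have ex': "int x' = int q * int (x' div q) + int (x' mod q)" by (metis of_nat_add of_nat_mult div_mult_mod_eq mult.commute)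
  have "int m * int y - int n * int x + int (x div q) = int m * int y' - int n * int x' + int (x' div q)"
    using assms(4) rank_alt[OF assms(1)] q_def g_def by simp
  hence E: "int g*int q*int y - int g*int p*(int q * int (x div q) + int (x mod q)) + int (x div q)
       = int g*int q*int y' - int g*int p*(int q * int (x' div q) + int (x' mod q)) + int (x' div q)"
    using mq np ex ex' by simp
  have "int y = int y'"
    apply (rule int_key[OF _ _ _ _ _ _ _ _ _ _ _ E])
    using gpos qpos cop xk xk' by (auto simp: coprime_int_iff)
  thus ?thesis by simp
qed

context
  fixes m n :: nat and a :: "nat \<Rightarrow> nat"
  assumes m0: "0 < m" and dp: "dyck_path m n a"
begin

abbreviation "R \<equiv> space_rank m n a"

lemma a_lt: "y < n \<Longrightarrow> a y < m"
proof -
  assume y: "y < n"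
  have "n * a y \<le> m * y" using dp y unfolding dyck_path_def by blast
  also have "\<dots> < m * n" using y m0 by simp
  finally have "n * a y < n * m" by (simp add: mult.commute)
  thus ?thesis by simp
qed

lemma R_inj: "c < n \<Longrightarrow> c' < n \<Longrightarrow> R c = R c' \<Longrightarrow> c = c'"
  unfolding space_rank_def using rank_inj[OF m0] a_lt by blast

lemma R_col: "y < z \<Longrightarrow> a y = a z \<Longrightarrow> R y < R z"
  unfolding space_rank_def rank_def using m0 by (simp add: mult_strict_left_mono)

lemma car_row_props:
  assumes "bij_betw f {0..<n} {1..n}" "i \<in> {1..n}"
  shows "car_row n f i < n \<and> f (car_row n f i) = i"
proof -
  obtain y where y: "y < n" "f y = i" using assms unfolding bij_betw_def by (metis atLeastLessThan_iff imageE zero_le)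
  have "(THE y. y < n \<and> f y = i) = y"
    apply (rule the_equality) using y assms unfolding bij_betw_def inj_on_def by auto
  thus ?thesis using y unfolding car_row_def by simp
qed

lemma car_row_f:
  assumes "bij_betw f {0..<n} {1..n}" "c < n"
  shows "car_row n f (f c) = c"
  unfolding car_row_def
  apply (rule the_equality) using assms unfolding bij_betw_def inj_on_def by auto

definition S where "S = {(c, c'). c < n \<and> c' < n \<and> R c < R c' \<and> R c' < R c + int m}"

lemma S_fin: "finite S"
  by (rule finite_subset[of _ "{0..<n} \<times> {0..<n}"]) (auto simp: S_def)

lemma T_sub:
  assumes "parking_function m n a f"
  shows "{(i, j). i \<in> {1..n} \<and> j \<in> {1..n} \<and> i < j \<and>
      car_rank m n a f i < car_rank m n a f j \<and>
      car_rank m n a f j < car_rank m n a f i + int m} \<subseteq> (\<lambda>(c,c'). (f c, f c')) ` S"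
proof
  fix p assume p: "p \<in> {(i, j). i \<in> {1..n} \<and> j \<in> {1..n} \<and> i < j \<and>
      car_rank m n a f i < car_rank m n a f j \<and>
      car_rank m n a f j < car_rank m n a f i + int m}"
  obtain i j where ij: "p = (i,j)" by force
  have b: "bij_betw f {0..<n} {1..n}" using assms unfolding parking_function_def by simp
  note ci = car_row_props[OF b, of i] and cj = car_row_props[OF b, of j]
  have "(car_row n f i, car_row n f j) \<in> S"
    using p ij ci cj unfolding S_def car_rank_def by auto
  moreover have "p = (f (car_row n f i), f (car_row n f j))" using p ij ci cj by auto
  ultimately show "p \<in> (\<lambda>(c,c'). (f c, f c')) ` S" by force
qed

lemma tdinv_le:
  assumes "parking_function m n a f"
  shows "tdinv m n a f \<le> card S"
proof -
  have "tdinv m n a f \<le> card ((\<lambda>(c,c'). (f c, f c')) ` S)"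
    unfolding tdinv_def by (rule card_mono[OF _ T_sub[OF assms]]) (simp add: S_fin)
  also have "\<dots> \<le> card S" by (rule card_image_le[OF S_fin])
  finally show ?thesis .
qed

lemma tdinv_eq:
  assumes "parking_function m n a f" "sigma_is_reverse m n a f"
  shows "tdinv m n a f = card S"
proof -
  have b: "bij_betw f {0..<n} {1..n}" using assms unfolding parking_function_def by simp
  have sup: "(\<lambda>(c,c'). (f c, f c')) ` S \<subseteq> {(i, j). i \<in> {1..n} \<and> j \<in> {1..n} \<and> i < j \<and>
      car_rank m n a f i < car_rank m n a f j \<and>
      car_rank m n a f j < car_rank m n a f i + int m}"
  proof
    fix p assume "p \<in> (\<lambda>(c,c'). (f c, f c')) ` S"
    then obtain c c' where cc: "(c,c') \<in> S" "p = (f c, f c')" by auto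
    have c: "c < n" "c' < n" "R c < R c'" "R c' < R c + int m" using cc unfolding S_def by auto
    have fc: "f c \<in> {1..n}" "f c' \<in> {1..n}" using b c unfolding bij_betw_def by auto
    have cr: "car_rank m n a f (f c) = R c" "car_rank m n a f (f c') = R c'"
      unfolding car_rank_def using car_row_f[OF b] c by auto
    have ne: "f c \<noteq> f c'"
    proof
      assume "f c = f c'"
      hence "c = c'" using b c unfolding bij_betw_def inj_on_def by auto
      thus False using c by simp
    qed
    have "f c < f c'"
    proof (rule ccontr)
      assume "\<not> f c < f c'"
      hence "f c' < f c" using ne by simp
      hence "car_rank m n a f (f c') < car_rank m n a f (f c)"
        using assms(2) fc unfolding sigma_is_reverse_def by blast
      thus False using cr c by simp
    qed
    thus "p \<in> {(i, j). i \<in> {1..n} \<and> j \<in> {1..n} \<and> i < j \<and>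
      car_rank m n a f i < car_rank m n a f j \<and>
      car_rank m n a f j < car_rank m n a f i + int m}" using cc fc cr c by auto
  qed
  have eq: "{(i, j). i \<in> {1..n} \<and> j \<in> {1..n} \<and> i < j \<and>
      car_rank m n a f i < car_rank m n a f j \<and>
      car_rank m n a f j < car_rank m n a f i + int m} = (\<lambda>(c,c'). (f c, f c')) ` S"
    using sup T_sub[OF assms(1)] by blast
  have inj: "inj_on (\<lambda>(c,c'). (f c, f c')) S"
    using b unfolding bij_betw_def inj_on_def S_def by auto
  show ?thesis unfolding tdinv_def eq by (rule card_image[OF inj])
qed

definition F where "F c = card {c'\<in>{0..<n}. R c' \<le> R c}"

lemma F_mono: "c < n \<Longrightarrow> c' < n \<Longrightarrow> R c < R c' \<Longrightarrow> F c < F c'"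
proof -
  assume h: "c < n" "c' < n" "R c < R c'"
  have sub: "{x\<in>{0..<n}. R x \<le> R c} \<subseteq> {x\<in>{0..<n}. R x \<le> R c'}" using h by auto
  have "c' \<in> {x\<in>{0..<n}. R x \<le> R c'}" using h by simp
  moreover have "c' \<notin> {x\<in>{0..<n}. R x \<le> R c}" using h by simp
  ultimately have "{x\<in>{0..<n}. R x \<le> R c} \<subset> {x\<in>{0..<n}. R x \<le> R c'}" using sub by blast
  moreover have "finite {x\<in>{0..<n}. R x \<le> R c'}" by simp
  ultimately show ?thesis unfolding F_def by (rule psubset_card_mono[rotated])
qed

lemma F_range: "c < n \<Longrightarrow> F c \<in> {1..n}"
proof -
  assume c: "c < n"
  have "c \<in> {c'\<in>{0..<n}. R c' \<le> R c}" using c by simp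
  moreover have "finite {c'\<in>{0..<n}. R c' \<le> R c}" by simp
  ultimately have "card {c'\<in>{0..<n}. R c' \<le> R c} > 0" using card_gt_0_iff by blast
  hence "F c \<ge> 1" unfolding F_def by simp
  moreover have "F c \<le> n" unfolding F_def
    using card_mono[of "{0..<n}" "{c'\<in>{0..<n}. R c' \<le> R c}"] by fastforce
  ultimately show ?thesis by simp
qed

lemma F_inj: "inj_on F {0..<n}"
proof (rule inj_onI)
  fix c c' assume h: "c \<in> {0..<n}" "c' \<in> {0..<n}" "F c = F c'"
  show "c = c'"
  proof (rule ccontr)
    assume "c \<noteq> c'"
    hence "R c \<noteq> R c'" using R_inj h by auto
    hence "R c < R c' \<or> R c' < R c" by linarith
    thus False using F_mono h by fastforce
  qed
qed

lemma F_bij: "bij_betw F {0..<n} {1..n}"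
proof -
  have sub: "F ` {0..<n} \<subseteq> {1..n}" using F_range by auto
  have "card (F ` {0..<n}) = card {1..n}" using card_image[OF F_inj] by simp
  hence "F ` {0..<n} = {1..n}" using sub by (simp add: card_subset_eq)
  thus ?thesis using F_inj unfolding bij_betw_def by simp
qed

lemma F_pf: "parking_function m n a F"
  unfolding parking_function_def using F_bij F_mono R_col by auto

lemma F_rev: "sigma_is_reverse m n a F"
  unfolding sigma_is_reverse_def
proof (intro ballI impI)
  fix i j assume h: "i \<in> {1..n}" "j \<in> {1..n}" "i < j"
  note ci = car_row_props[OF F_bij h(1)] and cj = car_row_props[OF F_bij h(2)]
  define c where "c = car_row n F i"
  define c' where "c' = car_row n F j"
  have c: "c < n" "c' < n" "F c = i" "F c' = j" using ci cj c_def c'_def by auto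
  have "c \<noteq> c'" using c h by auto
  hence "R c \<noteq> R c'" using R_inj c by auto
  moreover have "\<not> R c' < R c" using F_mono c h by fastforce
  ultimately have "R c < R c'" by linarith
  thus "car_rank m n a F i < car_rank m n a F j" unfolding car_rank_def c_def c'_def by simp
qed

lemma max_eq: "maxtdinv m n a = card S"
  unfolding maxtdinv_def
proof (rule Max_eqI)
  show "finite {tdinv m n a f |f. parking_function m n a f}"
    by (rule finite_subset[of _ "{0..card S}"]) (auto dest: tdinv_le)
  show "\<And>y. y \<in> {tdinv m n a f |f. parking_function m n a f} \<Longrightarrow> y \<le> card S"
    using tdinv_le by auto
  show "card S \<in> {tdinv m n a f |f. parking_function m n a f}"
    using tdinv_eq[OF F_pf F_rev] F_pf by (metis (mono_tags, lifting) mem_Collect_eq)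
qed

lemma sum_eq: "(\<Sum>c\<in>{0..<n}. \<Sum>c'\<in>{0..<n}.
              (if R c < R c' \<and> R c' < R c + int m then 1 else 0)) = int (card S)"
proof -
  have seteq: "{0..<n}\<times>{0..<n} \<inter> {p. R (fst p) < R (snd p) \<and> R (snd p) < R (fst p) + int m} = S"
    unfolding S_def by auto
  have "(\<Sum>c\<in>{0..<n}. \<Sum>c'\<in>{0..<n}. (if R c < R c' \<and> R c' < R c + int m then 1 else 0::int))
     = (\<Sum>p\<in>{0..<n}\<times>{0..<n}. (if R (fst p) < R (snd p) \<and> R (snd p) < R (fst p) + int m then 1 else 0))"
    by (simp add: sum.cartesian_product case_prod_beta)
  also have "\<dots> = int (card ({0..<n}\<times>{0..<n} \<inter> {p. R (fst p) < R (snd p) \<and> R (snd p) < R (fst p) + int m}))"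
    by (simp add: sum.If_cases)
  also have "\<dots> = int (card S)" using seteq by simp
  finally show ?thesis .
qed

end

theorem lemma1:
  fixes m n :: nat and a :: "nat \<Rightarrow> nat"
  assumes "0 < m" and "0 < n" and "dyck_path m n a"
  shows "(\<exists>f. parking_function m n a f \<and> sigma_is_reverse m n a f) \<and>
         (\<forall>f. parking_function m n a f \<and> sigma_is_reverse m n a f \<longrightarrow>
               maxtdinv m n a = tdinv m n a f) \<and>
         int (maxtdinv m n a) =
           (\<Sum>c\<in>{0..<n}. \<Sum>c'\<in>{0..<n}.
              (if space_rank m n a c < space_rank m n a c' \<and>
                  space_rank m n a c' < space_rank m n a c + int m then 1 else 0))"
  using F_pf[OF assms(1,3)] F_rev[OF assms(1,3)] max_eq[OF assms(1,3)]
    tdinv_eq[OF assms(1,3)] sum_eq[OF assms(1,3)] by metis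

end
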